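(* Let $r>0$, $V_T>0$ and $R_0\ge r$. Define $$f(t,V_s)=1+\frac{1}{2R_0(R_0+r)}\left(r^2-V_T^2\left(\frac{2\pi R_0}{V_s}+t\right)^2\right)-\cos\!\left(\frac{V_s t}{R_0}\right)$$ and $$V_{s_2}=\frac{\pi R_0V_T(R_0+r)+V_T\sqrt{R_0(R_0+r)\left[\pi^2R_0(R_0+r)+r^2\right]}}{r(R_0+r)}.$$ Then the minimum of $t\mapsto f(t,V_{s_2})$ over $0\le t\le\frac{\pi R_0}{2V_{s_2}}$ is strictly positive, that is, $f(t^*,V_{s_2})>0$ at the minimizer $t^*$. In particular $f(t,V_{s_2})\ge 0$ for all $t\in\left[0,\frac{\pi R_0}{2V_{s_2}}\right]$.
   Context: $R_0$ is the initial radius of the disk containing the evaders, $2r$ is the length of the sweeper's line sensor, $V_T$ is the maximal evader speed, and $V_{s_2}$ is a candidate sweeper speed. The condition $f(t,V_s)\ge 0$ for $0\le t\le\pi R_0/(2V_s)$ is the paper's criterion for the sweeper to be fast enough to accomplish the confinement task. *)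

theory Defs
  imports Complex_Main
begin

definition sweep_f :: "real \<Rightarrow> real \<Rightarrow> real \<Rightarrow> real \<Rightarrow> real \<Rightarrow> real" where
  "sweep_f R\<^sub>0 r V\<^sub>T t V\<^sub>s =
     1 + (r\<^sup>2 - V\<^sub>T\<^sup>2 * (2 * pi * R\<^sub>0 / V\<^sub>s + t)\<^sup>2) / (2 * R\<^sub>0 * (R\<^sub>0 + r))
       - cos (V\<^sub>s * t / R\<^sub>0)"

definition V_s2 :: "real \<Rightarrow> real \<Rightarrow> real \<Rightarrow> real" where
  "V_s2 R\<^sub>0 r V\<^sub>T =
     (pi * R\<^sub>0 * V\<^sub>T * (R\<^sub>0 + r)
      + V\<^sub>T * sqrt (R\<^sub>0 * (R\<^sub>0 + r) * (pi\<^sup>2 * R\<^sub>0 * (R\<^sub>0 + r) + r\<^sup>2)))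
     / (r * (R\<^sub>0 + r))"

end

theory Submission imports Defs begin
lemma cos_ub: fixes x::real assumes "x \<ge> 0" shows "cos x \<le> 1 - x^2/2 + x^4/24"
proof (cases "x = 0")
  case True then show ?thesis by simp
next
  case False
  then have "x > 0" using assms by simp
  from Maclaurin_cos_expansion2[OF this, of 4] obtain t where
    "cos x = (\<Sum>m<4. cos_coeff m * x ^ m) + (cos (t + 1/2 * real 4 * pi) / fact 4) * x ^ 4" by auto
  moreover have "(\<Sum>m<4. cos_coeff m * x ^ m) = 1 - x^2/2"
    apply (simp add: eval_nat_numeral cos_coeff_def) by presburger
  moreover have "(cos (t + 1/2 * real 4 * pi) / fact 4) * x ^ 4 \<le> x^4/24"
  proof -
    have "cos (t + 1/2 * real 4 * pi) \<le> 1" by simp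
    moreover have "(fact 4::real) = 24" by (simp add: numeral_eq_Suc)
    moreover have "cos (t + 1/2 * real 4 * pi) * x^4 \<le> 1 * x^4" by (rule mult_right_mono) simp_all
    ultimately show ?thesis by simp
  qed
  ultimately show ?thesis by linarith
qed

lemma core: fixes e s :: real
  assumes e: "0 < e" "e < 1/10" and s: "0 \<le> s" "s \<le> pi/2"
  shows "1 - cos s + e * (2 - e) * e / (2 * ((1-e)/(2*pi))^2) - e * (4*pi*s + s^2)/2 > 0"
proof -
  have c: "1 - cos s \<ge> 1/3 * s^2"
  proof -
    have "s < 2" using s pi_half_less_two by linarith
    hence "s^2 \<le> 4" using power_mono[of s 2 2] s by simp
    hence "s^4/24 \<le> 1/6 * s^2" proof -
      have "s^2 * s^2 \<le> 4 * s^2" by (rule mult_right_mono) (use \<open>s^2 \<le> 4\<close> in simp_all)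
      thus ?thesis by (simp add: power4_eq_xxxx power2_eq_square)
    qed
    thus ?thesis using cos_ub[OF s(1)] by linarith
  qed
  have "e * (2 - e) * e / (2 * ((1-e)/(2*pi))^2) = 2*pi^2*e^2*(2-e)/(1-e)^2"
  proof -
    have ne: "(1-e)^2 \<noteq> 0" using e by simp
    show ?thesis unfolding power_divide using ne by (simp add: field_simps power2_eq_square)
  qed
  also have "\<dots> \<ge> 4*pi^2*e^2"
  proof -
    have "(2-e) \<ge> 2*(1-e)^2" using e by (simp add: power2_eq_square algebra_simps)
    hence "(2-e)/(1-e)^2 \<ge> 2" using e by (simp add: field_simps)
    hence "2*pi^2*e^2*((2-e)/(1-e)^2) \<ge> 2*pi^2*e^2*2" by (intro mult_left_mono) simp_all
    thus ?thesis by (simp add: times_divide_eq_right)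
  qed
  finally have k: "e * (2 - e) * e / (2 * ((1-e)/(2*pi))^2) \<ge> 4*pi^2*e^2" .
  have eq: "1/3 * s^2 + 4*pi^2*e^2 - e * (4*pi*s + s^2)/2 = (s/2 - 2*pi*e)^2 + (1/12 - e/2)*s^2"
    by (simp add: power2_eq_square algebra_simps)
  have "(s/2 - 2*pi*e)^2 + (1/12 - e/2)*s^2 > 0"
  proof (cases "s = 0")
    case True then show ?thesis using e by simp
  next
    case False
    then have "(1/12 - e/2)*s^2 > 0" using e by simp
    then show ?thesis by (smt (verit) zero_le_power2)
  qed
  hence "1/3 * s^2 + 4*pi^2*e^2 - e * (4*pi*s + s^2)/2 > 0" using eq by simp
  thus ?thesis using c k by linarith
qed

lemma cancel_aux: "(m::real) \<noteq> 0 \<Longrightarrow> m * y / (2 * m) = y / 2" by simp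

theorem theorem11:
  fixes r V\<^sub>T R\<^sub>0 :: real
  assumes "r > 0" and "V\<^sub>T > 0" and "R\<^sub>0 \<ge> r"
  shows "(\<exists>ts\<in>{0 .. pi * R\<^sub>0 / (2 * V_s2 R\<^sub>0 r V\<^sub>T)}.
            (\<forall>t\<in>{0 .. pi * R\<^sub>0 / (2 * V_s2 R\<^sub>0 r V\<^sub>T)}.
               sweep_f R\<^sub>0 r V\<^sub>T ts (V_s2 R\<^sub>0 r V\<^sub>T) \<le> sweep_f R\<^sub>0 r V\<^sub>T t (V_s2 R\<^sub>0 r V\<^sub>T))
            \<and> sweep_f R\<^sub>0 r V\<^sub>T ts (V_s2 R\<^sub>0 r V\<^sub>T) > 0)
       \<and> (\<forall>t\<in>{0 .. pi * R\<^sub>0 / (2 * V_s2 R\<^sub>0 r V\<^sub>T)}. sweep_f R\<^sub>0 r V\<^sub>T t (V_s2 R\<^sub>0 r V\<^sub>T) \<ge> 0)"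
proof -
  define R where "R = R\<^sub>0"
  define W where "W = V\<^sub>T"
  define V where "V = V_s2 R\<^sub>0 r V\<^sub>T"
  define D where "D = R * (R + r) * (pi\<^sup>2 * R * (R + r) + r\<^sup>2)"
  have r: "r > 0" and W: "W > 0" and R: "R > 0" "R \<ge> r" using assms unfolding R_def W_def by auto
  have D: "D \<ge> 0" unfolding D_def using R r by simp
  have den: "r * (R + r) > 0" using r R by simp
  have hV0: "V = (pi * R * W * (R + r) + W * sqrt D) / (r * (R + r))"
    unfolding V_def V_s2_def R_def[symmetric] W_def[symmetric] D_def[symmetric] by simp
  have hV: "V * (r * (R + r)) = pi * R * W * (R + r) + W * sqrt D"
    using hV0 den nonzero_eq_divide_eq[of "r * (R + r)" V] by (metis order_less_irrefl)
  have Vpos: "V > 0"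
  proof -
    have "pi * R * W * (R + r) + W * sqrt D > 0" using R W r D by (simp add: add_pos_nonneg)
    thus ?thesis using hV den by (smt (verit) mult_nonpos_nonneg)
  qed
  have sq: "(V * (r * (R + r)) - pi * R * W * (R + r))^2 = W^2 * D"
    using hV D by (simp add: power_mult_distrib)
  have Q0: "r * (R + r) * (r * (R + r) * V^2 - 2 * pi * R * (R + r) * W * V - R * r * W^2)
      = (V * (r * (R + r)) - pi * R * W * (R + r))^2 - W^2 * D"
    unfolding D_def power2_eq_square by algebra
  have Q: "r * (R + r) * V^2 - 2 * pi * R * (R + r) * W * V - R * r * W^2 = 0"
    using Q0 sq den r R by simp
  define z where "z = W * R / (V * r)"
  define e where "e = 1 - 2 * pi * z"
  have zpos: "z > 0" unfolding z_def using W R Vpos r by simp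
  have key0: "R * (R + r) * e - r^2 * z^2 = R * (r * (R + r) * V^2 - 2 * pi * R * (R + r) * W * V - R * r * W^2) / (r * V^2)"
    unfolding e_def z_def using Vpos r R by (simp add: field_simps power2_eq_square)
  have key: "R * (R + r) * e = r^2 * z^2" using key0 Q by simp
  have epos: "e > 0"
  proof -
    have "r^2 * z^2 > 0" using r zpos by simp
    hence "R * (R + r) * e > 0" using key by simp
    moreover have "R * (R + r) > 0" using R r by simp
    ultimately show ?thesis by (simp add: zero_less_mult_iff)
  qed
  have esmall: "e < 1/10"
  proof -
    have "4 * z \<le> 2 * pi * z" using pi_ge_two zpos by (intro mult_right_mono) simp_all
    hence "z < 1/4" using epos unfolding e_def by simp
    hence "z * z < (1/4) * (1/4)" using zpos by (intro mult_strict_mono) simp_all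
    hence z2: "z^2 < 1/16" by (simp add: power2_eq_square)
    have "r * r \<le> R * R" using R r by (intro mult_mono) simp_all
    moreover have "r * r \<le> R * r" using R r by (intro mult_right_mono) simp_all
    ultimately have "2 * r^2 \<le> R * (R + r)" by (simp add: power2_eq_square algebra_simps)
    hence "2 * r^2 * e \<le> R * (R + r) * e" using epos by (simp add: mult_right_mono)
    hence "2 * r^2 * e \<le> r^2 * z^2" using key by simp
    hence "2 * e \<le> z^2" using r by simp
    thus ?thesis using z2 by simp
  qed
  have fval: "sweep_f R\<^sub>0 r V\<^sub>T t V = 1 - cos (V * t / R) + e * (2 - e) * e / (2 * ((1-e)/(2*pi))^2) - e * (4*pi*(V * t / R) + (V * t / R)^2)/2" for t
  proof -
    define s where "s = V * t / R"
    have a: "W * (2 * pi * R / V + t) = r * z * (2 * pi + s)"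
      unfolding z_def s_def using Vpos r R by (simp add: field_simps)
    have b: "W^2 * (2 * pi * R / V + t)^2 = R * (R + r) * e * (2 * pi + s)^2"
      using a key by (metis power_mult_distrib)
    have c: "r^2 = R * (R + r) * e / z^2" using key zpos by (simp add: field_simps)
    have d: "(r^2 - W^2 * (2 * pi * R / V + t)^2) / (2 * R * (R + r)) = e / (2 * z^2) - e * (2 * pi + s)^2 / 2"
    proof -
      have M: "R * (R + r) > 0" using R r by simp
      have X: "(r^2 - W^2 * (2 * pi * R / V + t)^2) = R * (R + r) * (e / z^2 - e * (2 * pi + s)^2)"
        unfolding b c by (simp add: algebra_simps)
      have C: "R * (R + r) * Y / (2 * R * (R + r)) = Y / 2" for Y
      proof -
        have "2 * R * (R + r) = 2 * (R * (R + r))" by (simp only: mult.assoc)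
        moreover have "R * (R + r) \<noteq> 0" using M by (metis less_irrefl)
        ultimately show ?thesis using cancel_aux[of "R * (R + r)" Y] by metis
      qed
      have "(r^2 - W^2 * (2 * pi * R / V + t)^2) / (2 * R * (R + r))
          = R * (R + r) * (e / z^2 - e * (2 * pi + s)^2) / (2 * R * (R + r))" by (simp only: X)
      also have "\<dots> = (e / z^2 - e * (2 * pi + s)^2) / 2" by (rule C)
      also have "\<dots> = e / (2 * z^2) - e * (2 * pi + s)^2 / 2" by (simp add: diff_divide_distrib)
      finally show ?thesis .
    qed
    have zz: "(1-e)/(2*pi) = z" unfolding e_def by simp
    have pz: "2 * pi * z = 1 - e" unfolding e_def by simp
    have fp0: "4 * pi^2 * z^2 = (1-e)^2" unfolding pz[symmetric] by (simp add: power_mult_distrib)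
    have fp: "4 * pi^2 = (1-e)^2 / z^2" using fp0 zpos by (simp add: eq_divide_eq)
    have h1: "e * (2*pi+s)^2/2 = e*(4*pi^2)/2 + e*(4*pi*s+s^2)/2" by (simp add: power2_eq_square algebra_simps)
    have h2: "e*(4*pi^2)/2 = e*(1-e)^2/(2*z^2)" unfolding fp by simp
    have h3: "e - e*(1-e)^2 = e*(2-e)*e" by (simp add: power2_eq_square algebra_simps)
    have h4: "e/(2*z^2) - e*(1-e)^2/(2*z^2) = e*(2-e)*e/(2*z^2)" unfolding h3[symmetric] by (simp add: diff_divide_distrib)
    have "e / (2 * z^2) - e * (2 * pi + s)^2 / 2 = e * (2 - e) * e / (2 * z^2) - e * (4*pi*s + s^2)/2"
      unfolding h1 h2 h4[symmetric] by simp
    thus ?thesis unfolding sweep_f_def R_def[symmetric] W_def[symmetric] s_def[symmetric] zz d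
      by simp
  qed
  define T where "T = pi * R / (2 * V)"
  have pos: "sweep_f R\<^sub>0 r V\<^sub>T t V > 0" if t: "t \<in> {0..T}" for t
  proof -
    have "V * t / R \<ge> 0" using t Vpos R by simp
    moreover have "V * t / R \<le> pi / 2"
    proof -
      have "V * t \<le> V * T" using t Vpos by simp
      also have "V * T = pi * R / 2" unfolding T_def using Vpos by simp
      finally show ?thesis using R by (simp add: field_simps)
    qed
    ultimately show ?thesis unfolding fval using core[OF epos esmall] by blast
  qed
  have cont: "continuous_on {0..T} (\<lambda>t. sweep_f R\<^sub>0 r V\<^sub>T t V)"
    unfolding sweep_f_def using R r unfolding R_def by (intro continuous_intros) auto
  have ne: "{0..T} \<noteq> {}" unfolding T_def using Vpos R by simp
  obtain ts where ts: "ts \<in> {0..T}" "\<forall>t\<in>{0..T}. sweep_f R\<^sub>0 r V\<^sub>T ts V \<le> sweep_f R\<^sub>0 r V\<^sub>T t V"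
    using continuous_attains_inf[OF compact_Icc ne cont] by blast
  show ?thesis
  proof -
    have Teq: "{0..pi * R\<^sub>0 / (2 * V)} = {0..T}" unfolding T_def R_def ..
    show ?thesis unfolding V_def[symmetric] Teq using ts pos by (meson less_imp_le)
  qed
qed

end
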